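(* Let $f=\{f_n\}$ be a one-way permutation family (against non-uniform PPT inverters), $X$ uniform on $\{0,1\}^n$, $Y=f(X)$. For each $n$ let $P=P^{(n)}$ be a probabilistic generative model supporting two factorizations, $P_{1\to2}(x,y)=P_1(x)P_2(y;x)$ and $P_{2\to1}(x,y)=P_2(y)P_1(x;y)$, where $P_1(\cdot)$, $P_2(\cdot)$, $P_1(\cdot\,;y)$ (for each $y$) and $P_2(\cdot\,;x)$ (for each $x$) are normalized probability distributions on $\{0,1\}^n$, each given (as a function of its conditioning argument) by a program of length polynomial in $n$ that evaluates and samples it in time polynomial in $n$. Let $\varepsilon\ge 0$ and suppose $$\mathbb E[-\log P_1(X)]\le n+\varepsilon,\qquad \mathbb E[-\log P_2(f(X);X)]\le\varepsilon .$$ Then for every constant $c$ there exists $N$ such that for all $n>N$ there is at least one $x\in\{0,1\}^n$ with $$P_1(x)\,P_2(f(x);x)\;>\;n^{c}\,2^{-2\varepsilon}\,P_2(f(x))\,P_1(x;f(x)).$$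
   Context: Logarithms are base 2. A polynomial-time computable permutation family $f_n:\{0,1\}^n\to\{0,1\}^n$ is one-way against non-uniform PPT inverters if for every probabilistic polynomial-time algorithm $A$ with advice strings of length $\mathrm{poly}(n)$, $\Pr_{x\sim U_n}[A(f(x))=x]$ is negligible in $n$ (smaller than $n^{-c}$ for every $c>0$ and all large $n$). "Sampling" a distribution means producing, from uniformly random bits, an output distributed exactly according to it. *)

theory Defs
  imports Complex_Main
begin

definition bits :: "nat \<Rightarrow> bool list set" where
  "bits n = {xs. length xs = n}"

text \<open>Wires 0..<length(input) carry the data input, the next c_rand wires carry
independent uniform random bits, and each gate appends one new wire.
Non-uniform PPT algorithms with polynomial advice, and programs of polynomial
length running in polynomial time, are modelled (as is standard, up to polynomial
equivalence) by families of randomized circuits of polynomial size.\<close>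

datatype gate = GAnd nat nat | GOr nat nat | GNot nat

record circuit =
  c_gates :: "gate list"
  c_rand  :: nat
  c_out   :: "nat list"

definition wire_val :: "bool list \<Rightarrow> nat \<Rightarrow> bool" where
  "wire_val ws i = (if i < length ws then ws ! i else False)"

fun gate_val :: "bool list \<Rightarrow> gate \<Rightarrow> bool" where
  "gate_val ws (GAnd i j) = (wire_val ws i \<and> wire_val ws j)"
| "gate_val ws (GOr i j) = (wire_val ws i \<or> wire_val ws j)"
| "gate_val ws (GNot i) = (\<not> wire_val ws i)"

fun eval_gates :: "bool list \<Rightarrow> gate list \<Rightarrow> bool list" where
  "eval_gates ws [] = ws"
| "eval_gates ws (g # gs) = eval_gates (ws @ [gate_val ws g]) gs"

definition run :: "circuit \<Rightarrow> bool list \<Rightarrow> bool list \<Rightarrow> bool list" where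
  "run C inp r = map (wire_val (eval_gates (inp @ r) (c_gates C))) (c_out C)"

definition csize :: "circuit \<Rightarrow> nat" where
  "csize C = length (c_gates C) + c_rand C + length (c_out C)"

definition out_prob :: "circuit \<Rightarrow> bool list \<Rightarrow> bool list \<Rightarrow> real" where
  "out_prob C inp z =
     real (card {r \<in> bits (c_rand C). run C inp r = z}) / 2 ^ c_rand C"

definition poly_bounded :: "(nat \<Rightarrow> nat) \<Rightarrow> bool" where
  "poly_bounded s \<longleftrightarrow> (\<exists>k::nat. \<forall>n. s n \<le> (n + 2) ^ k)"

definition poly_family :: "(nat \<Rightarrow> circuit) \<Rightarrow> bool" where
  "poly_family C \<longleftrightarrow> poly_bounded (\<lambda>n. csize (C n))"

definition negligible :: "(nat \<Rightarrow> real) \<Rightarrow> bool" where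
  "negligible e \<longleftrightarrow> (\<forall>c::real. c > 0 \<longrightarrow>
      (\<exists>N. \<forall>n>N. \<bar>e n\<bar> < real n powr (- c)))"

definition invert_prob ::
  "(nat \<Rightarrow> circuit) \<Rightarrow> (nat \<Rightarrow> bool list \<Rightarrow> bool list) \<Rightarrow> nat \<Rightarrow> real" where
  "invert_prob A f n = (\<Sum>x\<in>bits n. out_prob (A n) (f n x) x) / 2 ^ n"

definition one_way_perm :: "(nat \<Rightarrow> bool list \<Rightarrow> bool list) \<Rightarrow> bool" where
  "one_way_perm f \<longleftrightarrow>
     (\<forall>n. bij_betw (f n) (bits n) (bits n)) \<and>
     (\<exists>F. poly_family F \<and> (\<forall>n. c_rand (F n) = 0) \<and>
          (\<forall>n. \<forall>x\<in>bits n. run (F n) x [] = f n x)) \<and>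
     (\<forall>A. poly_family A \<longrightarrow> negligible (invert_prob A f))"

text \<open>P n cond z: probability of z \<in> {0,1}^n given the conditioning argument
cond \<in> {0,1}^(k n) (k n = 0 for an unconditional distribution).\<close>

definition is_cond_distr :: "(nat \<Rightarrow> nat) \<Rightarrow> (nat \<Rightarrow> bool list \<Rightarrow> bool list \<Rightarrow> real) \<Rightarrow> bool" where
  "is_cond_distr k P \<longleftrightarrow> (\<forall>n. \<forall>cond\<in>bits (k n).
      (\<forall>z\<in>bits n. P n cond z \<ge> 0) \<and> (\<Sum>z\<in>bits n. P n cond z) = 1)"

definition samples :: "(nat \<Rightarrow> nat) \<Rightarrow> (nat \<Rightarrow> circuit) \<Rightarrow> (nat \<Rightarrow> bool list \<Rightarrow> bool list \<Rightarrow> real) \<Rightarrow> bool" where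
  "samples k C P \<longleftrightarrow> (\<forall>n. \<forall>cond\<in>bits (k n). \<forall>z\<in>bits n. out_prob (C n) cond z = P n cond z)"

definition bin_val :: "bool list \<Rightarrow> nat" where
  "bin_val bs = foldl (\<lambda>a b. 2 * a + (if b then 1 else 0)) 0 bs"

definition evaluates :: "(nat \<Rightarrow> nat) \<Rightarrow> (nat \<Rightarrow> circuit) \<Rightarrow> (nat \<Rightarrow> bool list \<Rightarrow> bool list \<Rightarrow> real) \<Rightarrow> bool" where
  "evaluates k E P \<longleftrightarrow> (\<forall>n. c_rand (E n) = 0 \<and>
     (\<forall>cond\<in>bits (k n). \<forall>z\<in>bits n.
        P n cond z = real (bin_val (run (E n) (cond @ z) [])) / 2 ^ (length (c_out (E n)) - 1)))"

definition efficient_distr :: "(nat \<Rightarrow> nat) \<Rightarrow> (nat \<Rightarrow> bool list \<Rightarrow> bool list \<Rightarrow> real) \<Rightarrow> bool" where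
  "efficient_distr k P \<longleftrightarrow> is_cond_distr k P \<and>
     (\<exists>C. poly_family C \<and> samples k C P) \<and>
     (\<exists>E. poly_family E \<and> evaluates k E P)"

end

theory Submission
  imports Defs
begin

lemma bits_finite: "finite (bits n)"
  unfolding bits_def using finite_lists_length_eq[of "UNIV::bool set" n] by simp

lemma bits_card: "card (bits n) = 2 ^ n"
  unfolding bits_def using card_lists_length_eq[of "UNIV::bool set" n] by simp

lemma jensen_ln:
  fixes a :: "'a \<Rightarrow> real"
  assumes fin: "finite S" and ne: "S \<noteq> {}" and pos: "\<And>i. i \<in> S \<Longrightarrow> a i > 0"
  shows "(\<Sum>i\<in>S. ln (a i)) \<le> real (card S) * ln ((\<Sum>i\<in>S. a i) / real (card S))"
proof -
  define A where "A = (\<Sum>i\<in>S. a i) / real (card S)"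
  have cS: "real (card S) > 0" using fin ne by (simp add: card_gt_0_iff)
  have sp: "(\<Sum>i\<in>S. a i) > 0" using fin ne pos by (simp add: sum_pos)
  have Ap: "A > 0" unfolding A_def using cS sp by simp
  have "\<And>i. i \<in> S \<Longrightarrow> ln (a i) - ln A \<le> a i / A - 1"
  proof -
    fix i assume i: "i \<in> S"
    have "ln (a i) - ln A = ln (a i / A)" using pos[OF i] Ap by (simp add: ln_div)
    also have "\<dots> \<le> a i / A - 1" using pos[OF i] Ap by (intro ln_le_minus_one) simp
    finally show "ln (a i) - ln A \<le> a i / A - 1" .
  qed
  hence "(\<Sum>i\<in>S. ln (a i) - ln A) \<le> (\<Sum>i\<in>S. a i / A - 1)" by (rule sum_mono)
  also have "\<dots> = (\<Sum>i\<in>S. a i) / A - real (card S)"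
    by (simp add: sum_subtractf sum_divide_distrib)
  also have "\<dots> = 0" unfolding A_def using cS sp by simp
  finally show ?thesis unfolding A_def[symmetric] by (simp add: sum_subtractf)
qed

lemma key_bound:
  fixes g :: "bool list \<Rightarrow> bool list" and pa pb :: "bool list \<Rightarrow> real"
    and qa qb :: "bool list \<Rightarrow> bool list \<Rightarrow> real" and e c :: real and n :: nat
  assumes n1: "n \<ge> 1"
    and bij: "bij_betw g (bits n) (bits n)"
    and p2nn: "\<And>y. y \<in> bits n \<Longrightarrow> pb y \<ge> 0"
    and p2sum: "(\<Sum>y\<in>bits n. pb y) = 1"
    and q1nn: "\<And>y x. y \<in> bits n \<Longrightarrow> x \<in> bits n \<Longrightarrow> qa y x \<ge> 0"
    and p1pos: "\<forall>x\<in>bits n. pa x > 0"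
    and h1: "(\<Sum>x\<in>bits n. - log 2 (pa x)) / 2 ^ n \<le> real n + e"
    and q2pos: "\<forall>x\<in>bits n. qb x (g x) > 0"
    and h2: "(\<Sum>x\<in>bits n. - log 2 (qb x (g x))) / 2 ^ n \<le> e"
    and fail: "\<forall>x\<in>bits n. \<not> (pa x * qb x (g x) >
           real n powr c * 2 powr (- 2 * e) * pb (g x) * qa (g x) x)"
  shows "(\<Sum>x\<in>bits n. qa (g x) x) / 2 ^ n \<ge> real n powr (- c)"
proof -
  let ?S = "bits n"
  let ?K = "(2::real) ^ n"
  have fin: "finite ?S" by (rule bits_finite)
  have cS: "real (card ?S) = ?K" by (simp add: bits_card)
  have ne: "?S \<noteq> {}" using cS by auto
  have Kp: "?K > 0" by simp
  have gS: "\<And>x. x \<in> ?S \<Longrightarrow> g x \<in> ?S" using bij by (meson bij_betwE)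
  have npos: "real n > 0" using n1 by simp
  have l2: "ln (2::real) > 0" by simp
  have pw: "\<And>x. x \<in> ?S \<Longrightarrow> pb (g x) > 0 \<and> qa (g x) x > 0 \<and>
      ln (pa x) + ln (qb x (g x)) \<le> c * ln (real n) - 2 * e * ln 2 + ln (pb (g x)) + ln (qa (g x) x)"
  proof -
    fix x assume x: "x \<in> ?S"
    define R where "R = real n powr c * 2 powr (- 2 * e)"
    have Rp: "R > 0" unfolding R_def using npos by simp
    have lhs: "pa x * qb x (g x) > 0" using p1pos q2pos x by simp
    have le: "pa x * qb x (g x) \<le> R * (pb (g x) * qa (g x) x)"
      using fail x unfolding R_def by (simp add: mult.assoc not_less)
    have a: "pb (g x) \<ge> 0" "qa (g x) x \<ge> 0" using p2nn q1nn gS x by auto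
    have prodpos: "pb (g x) * qa (g x) x > 0"
    proof (rule ccontr)
      assume "\<not> ?thesis"
      hence "pb (g x) * qa (g x) x = 0" using a by (metis mult_nonneg_nonneg order.order_iff_strict)
      thus False using le lhs by (metis mult_zero_right not_le)
    qed
    hence b: "pb (g x) > 0" "qa (g x) x > 0" using a
      by (metis less_eq_real_def mult_eq_0_iff)+
    have "ln (pa x * qb x (g x)) \<le> ln (R * (pb (g x) * qa (g x) x))"
      using le lhs by simp
    moreover have "ln (pa x * qb x (g x)) = ln (pa x) + ln (qb x (g x))"
      using p1pos q2pos x by (auto simp add: ln_mult)
    moreover have "ln (R * (pb (g x) * qa (g x) x)) = ln R + ln (pb (g x)) + ln (qa (g x) x)"
      using Rp b by (auto simp add: ln_mult)
    moreover have "ln R = c * ln (real n) - 2 * e * ln 2"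
      unfolding R_def using npos by (simp add: ln_mult ln_powr)
    ultimately show "pb (g x) > 0 \<and> qa (g x) x > 0 \<and>
      ln (pa x) + ln (qb x (g x)) \<le> c * ln (real n) - 2 * e * ln 2 + ln (pb (g x)) + ln (qa (g x) x)"
      using b by linarith
  qed
  have sA: "(\<Sum>x\<in>?S. ln (pa x)) \<ge> - (real n + e) * ln 2 * ?K"
  proof -
    have "(\<Sum>x\<in>?S. - log 2 (pa x)) = - (\<Sum>x\<in>?S. ln (pa x)) / ln 2"
      by (simp add: log_def sum_negf sum_divide_distrib)
    moreover have "(\<Sum>x\<in>?S. - log 2 (pa x)) \<le> (real n + e) * ?K"
      using h1 Kp by (metis pos_divide_le_eq)
    ultimately have "- (\<Sum>x\<in>?S. ln (pa x)) / ln 2 \<le> (real n + e) * ?K" by simp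
    hence "- (\<Sum>x\<in>?S. ln (pa x)) \<le> (real n + e) * ?K * ln 2" using l2 by (metis pos_divide_le_eq minus_divide_left)
    thus ?thesis by (simp add: algebra_simps)
  qed
  have sB: "(\<Sum>x\<in>?S. ln (qb x (g x))) \<ge> - e * ln 2 * ?K"
  proof -
    have "(\<Sum>x\<in>?S. - log 2 (qb x (g x))) = - (\<Sum>x\<in>?S. ln (qb x (g x))) / ln 2"
      by (simp add: log_def sum_negf sum_divide_distrib)
    moreover have "(\<Sum>x\<in>?S. - log 2 (qb x (g x))) \<le> e * ?K"
      using h2 Kp by (metis pos_divide_le_eq)
    ultimately have "- (\<Sum>x\<in>?S. ln (qb x (g x))) / ln 2 \<le> e * ?K" by simp
    hence "- (\<Sum>x\<in>?S. ln (qb x (g x))) \<le> e * ?K * ln 2" using l2 by (metis pos_divide_le_eq minus_divide_left)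
    thus ?thesis by (simp add: algebra_simps)
  qed
  have sP: "(\<Sum>x\<in>?S. ln (pb (g x))) \<le> - real n * ln 2 * ?K"
  proof -
    have eq: "(\<Sum>x\<in>?S. ln (pb (g x))) = (\<Sum>y\<in>?S. ln (pb y))"
      using sum.reindex_bij_betw[OF bij, of "\<lambda>y. ln (pb y)"] .
    have pos: "\<And>y. y \<in> ?S \<Longrightarrow> pb y > 0"
    proof -
      fix y assume y: "y \<in> ?S"
      then obtain x where "x \<in> ?S" "y = g x" using bij by (metis bij_betw_iff_bijections)
      thus "pb y > 0" using pw by auto
    qed
    have "(\<Sum>y\<in>?S. ln (pb y)) \<le> real (card ?S) * ln ((\<Sum>y\<in>?S. pb y) / real (card ?S))"
      by (rule jensen_ln[OF fin ne pos])
    also have "\<dots> = ?K * ln (1 / ?K)" using cS p2sum by simp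
    also have "ln (1 / ?K) = - real n * ln 2" by (simp add: ln_div ln_realpow)
    finally show ?thesis using eq by (simp add: algebra_simps)
  qed
  have sPW: "(\<Sum>x\<in>?S. ln (pa x) + ln (qb x (g x))) \<le>
      (\<Sum>x\<in>?S. c * ln (real n) - 2 * e * ln 2 + ln (pb (g x)) + ln (qa (g x) x))"
    using pw by (intro sum_mono) auto
  hence "(\<Sum>x\<in>?S. ln (pa x)) + (\<Sum>x\<in>?S. ln (qb x (g x))) \<le>
      ?K * (c * ln (real n) - 2 * e * ln 2) + (\<Sum>x\<in>?S. ln (pb (g x))) + (\<Sum>x\<in>?S. ln (qa (g x) x))"
    using cS by (simp add: sum.distrib)
  hence sQ: "(\<Sum>x\<in>?S. ln (qa (g x) x)) \<ge> - c * ln (real n) * ?K"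
    using sA sB sP by (simp add: algebra_simps)
  have q1pos: "\<And>x. x \<in> ?S \<Longrightarrow> qa (g x) x > 0" using pw by auto
  have "(\<Sum>x\<in>?S. ln (qa (g x) x)) \<le> ?K * ln ((\<Sum>x\<in>?S. qa (g x) x) / ?K)"
    using jensen_ln[OF fin ne q1pos] cS by simp
  hence "ln ((\<Sum>x\<in>?S. qa (g x) x) / ?K) \<ge> - c * ln (real n)"
    using sQ Kp by (smt (verit) mult_le_cancel_left_pos mult.commute)
  moreover have avp: "(\<Sum>x\<in>?S. qa (g x) x) / ?K > 0"
    using fin ne q1pos by (simp add: sum_pos)
  moreover have "- c * ln (real n) = ln (real n powr (- c))" using npos by (simp add: ln_powr)
  ultimately show ?thesis using npos
    by (metis ln_le_cancel_iff powr_gt_zero of_nat_0_less_iff npos less_numeral_extra(3) gr_zeroI)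
qed


theorem mainTheorem9:
  fixes f :: "nat \<Rightarrow> bool list \<Rightarrow> bool list"
    and P1 P2 :: "nat \<Rightarrow> bool list \<Rightarrow> real"
    and P1c :: "nat \<Rightarrow> bool list \<Rightarrow> bool list \<Rightarrow> real"
    and P2c :: "nat \<Rightarrow> bool list \<Rightarrow> bool list \<Rightarrow> real"
    and \<epsilon> :: "nat \<Rightarrow> real"
  assumes owp: "one_way_perm f"
    and effP1: "efficient_distr (\<lambda>_. 0) (\<lambda>n _ x. P1 n x)"
    and effP2: "efficient_distr (\<lambda>_. 0) (\<lambda>n _ y. P2 n y)"
    and effP1c: "efficient_distr (\<lambda>n. n) P1c"
    and effP2c: "efficient_distr (\<lambda>n. n) P2c"
    and eps_nonneg: "\<And>n. \<epsilon> n \<ge> 0"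
    and H1: "\<And>n. (\<forall>x\<in>bits n. P1 n x > 0) \<and>
               (\<Sum>x\<in>bits n. - log 2 (P1 n x)) / 2 ^ n \<le> real n + \<epsilon> n"
    and H2: "\<And>n. (\<forall>x\<in>bits n. P2c n x (f n x) > 0) \<and>
               (\<Sum>x\<in>bits n. - log 2 (P2c n x (f n x))) / 2 ^ n \<le> \<epsilon> n"
  shows "\<forall>c::real. \<exists>N::nat. \<forall>n>N. \<exists>x\<in>bits n.
           P1 n x * P2c n x (f n x) >
           real n powr c * 2 powr (- 2 * \<epsilon> n) * P2 n (f n x) * P1c n (f n x) x"
  proof
  fix c :: real
  show "\<exists>N::nat. \<forall>n>N. \<exists>x\<in>bits n.
           P1 n x * P2c n x (f n x) >
           real n powr c * 2 powr (- 2 * \<epsilon> n) * P2 n (f n x) * P1c n (f n x) x"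
  proof (rule ccontr)
    assume neg: "\<not> ?thesis"
    obtain C where Cp: "poly_family C" and Cs: "samples (\<lambda>n. n) C P1c"
      using effP1c unfolding efficient_distr_def by blast
    have bijf: "\<And>n. bij_betw (f n) (bits n) (bits n)" using owp unfolding one_way_perm_def by blast
    have negl: "negligible (invert_prob C f)" using owp Cp unfolding one_way_perm_def by blast
    define c' where "c' = \<bar>c\<bar> + 1"
    have "c' > 0" unfolding c'_def by simp
    then obtain N where N: "\<forall>n>N. \<bar>invert_prob C f n\<bar> < real n powr (- c')"
      using negl unfolding negligible_def by blast
    from neg obtain n where nN: "n > max N 1" and fail: "\<forall>x\<in>bits n. \<not> (P1 n x * P2c n x (f n x) >
           real n powr c * 2 powr (- 2 * \<epsilon> n) * P2 n (f n x) * P1c n (f n x) x)"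
      by (metis (no_types, lifting))
    have n1: "n \<ge> 1" using nN by simp
    have nil: "[] \<in> bits 0" by (simp add: bits_def)
    have d2: "is_cond_distr (\<lambda>_. 0) (\<lambda>n _ y. P2 n y)" using effP2 unfolding efficient_distr_def by blast
    have d1c: "is_cond_distr (\<lambda>n. n) P1c" using effP1c unfolding efficient_distr_def by blast
    have p2nn: "\<And>y. y \<in> bits n \<Longrightarrow> P2 n y \<ge> 0" using d2 nil unfolding is_cond_distr_def by blast
    have p2sum: "(\<Sum>y\<in>bits n. P2 n y) = 1" using d2 nil unfolding is_cond_distr_def by blast
    have q1nn: "\<And>y x. y \<in> bits n \<Longrightarrow> x \<in> bits n \<Longrightarrow> P1c n y x \<ge> 0"
      using d1c unfolding is_cond_distr_def by blast
    have kb: "(\<Sum>x\<in>bits n. P1c n (f n x) x) / 2 ^ n \<ge> real n powr (- c)"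
      by (rule key_bound[where g="f n" and pa="P1 n" and pb="P2 n" and qa="P1c n" and qb="P2c n" and e="\<epsilon> n", OF n1 bijf[of n] p2nn p2sum q1nn conjunct1[OF H1[of n]] conjunct2[OF H1[of n]]
            conjunct1[OF H2[of n]] conjunct2[OF H2[of n]] fail])
    have "invert_prob C f n = (\<Sum>x\<in>bits n. P1c n (f n x) x) / 2 ^ n"
      unfolding invert_prob_def
    proof (intro arg_cong[where f="\<lambda>t. t / 2 ^ n"] sum.cong refl)
      fix x assume x: "x \<in> bits n"
      have "f n x \<in> bits n" using bijf x by (meson bij_betwE)
      thus "out_prob (C n) (f n x) x = P1c n (f n x) x" using Cs x unfolding samples_def by blast
    qed
    hence ge: "invert_prob C f n \<ge> real n powr (- c)" using kb by simp
    have "real n powr (- c) \<ge> real n powr (- c')"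
      using n1 unfolding c'_def by (intro powr_mono) auto
    moreover have "\<bar>invert_prob C f n\<bar> < real n powr (- c')" using N nN by simp
    ultimately show False using ge by linarith
  qed
qed

end
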